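(* Let $n \ge 2$. Then $|S_{1,1}(n)|$ is odd if and only if $n = 2^k$ for some integer $k \ge 1$.
   Context: For $n \ge 2$, let $\mathcal{I}_n$ be the set of all irreducible polynomials of degree $n$ in $\mathbb{F}_2[x]$. Every $f \in \mathcal{I}_n$ is monic with constant term $1$; write $f = x^n + f_{n-1}x^{n-1} + \cdots + f_1 x + 1$ with $f_k \in \mathbb{F}_2$. $S_{1,1}(n)$ denotes the set of $f \in \mathcal{I}_n$ with $f_{n-1} = 1$ and $f_1 = 1$. *)

theory Defs
  imports "HOL-Library.Z2" "HOL-Computational_Algebra.Polynomial_Factorial"
begin

definition irred_polys :: "nat \<Rightarrow> bit poly set" where
  "irred_polys n = {f. irreducible f \<and> degree f = n \<and> lead_coeff f = 1}"

definition S11 :: "nat \<Rightarrow> bit poly set" where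
  "S11 n = {f \<in> irred_polys n. coeff f (n - 1) = 1 \<and> coeff f 1 = 1}"

end

theory Submission
  imports Defs
begin

abbreviation pX :: "bit poly" where "pX \<equiv> [:0,1:]"

lemma bit_two_poly [simp]: "(2::bit poly) = 0"
  by (metis bit_2_eq_0 of_nat_numeral of_nat_poly pCons_0_0 numeral_2_eq_2)

lemma bit_poly_add_self [simp]: "(a::bit poly) + a = 0"
  by (metis bit_two_poly mult_2 mult_zero_left)

lemma bit_poly_neg [simp]: "- (a::bit poly) = a"
  by (metis add_eq_0_iff bit_poly_add_self)

lemma bit_poly_minus: "(a::bit poly) - b = a + b"
  by (metis bit_poly_neg diff_conv_add_uminus)

lemma frob_sq: "((a::bit poly) + b)^2 = a^2 + b^2"
proof -
  have "(a+b)^2 = a^2 + b^2 + 2*a*b" by (simp add: power2_eq_square algebra_simps)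
  thus ?thesis by simp
qed

lemma frob: "((a::bit poly) + b)^(2^k) = a^(2^k) + b^(2^k)"
proof (induction k)
  case 0 then show ?case by simp
next
  case (Suc k)
  have "(a+b)^(2^Suc k) = ((a+b)^(2^k))^2" by (simp add: power_mult[symmetric] mult.commute)
  also have "\<dots> = (a^(2^k) + b^(2^k))^2" using Suc by simp
  also have "\<dots> = (a^(2^k))^2 + (b^(2^k))^2" by (rule frob_sq)
  also have "\<dots> = a^(2^Suc k) + b^(2^Suc k)" by (simp add: power_mult[symmetric] mult.commute)
  finally show ?case .
qed

lemma dvd_power_cong: "(p::'a::comm_ring_1) dvd a - b \<Longrightarrow> p dvd a^n - b^n"
proof (induction n)
  case 0 then show ?case by simp
next
  case (Suc n)
  have "a^Suc n - b^Suc n = a * (a^n - b^n) + b^n * (a - b)" by (simp add: algebra_simps)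
  thus ?case using Suc by (simp add: dvd_add)
qed


lemma UNIV_bit: "(UNIV :: bit set) = {0, 1}"
  by (auto intro: bit.exhaust)

lemma card_UNIV_bit: "card (UNIV :: bit set) = 2"
  by (simp add: UNIV_bit)

lemma polys_deg_less_eq:
  assumes "d \<ge> 1"
  shows "{u::bit poly. degree u < d} = Poly ` {xs. set xs \<subseteq> UNIV \<and> length xs = d}"
proof (intro equalityI subsetI)
  fix u :: "bit poly" assume "u \<in> {u. degree u < d}"
  hence du: "degree u < d" by simp
  define xs where "xs = map (coeff u) [0..<d]"
  have "Poly xs = u"
  proof (rule poly_eqI)
    fix i
    show "coeff (Poly xs) i = coeff u i"
      using du by (cases "i < d") (auto simp: xs_def nth_default_def coeff_eq_0)
  qed
  moreover have "length xs = d" by (simp add: xs_def)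
  ultimately show "u \<in> Poly ` {xs. set xs \<subseteq> UNIV \<and> length xs = d}" by blast
next
  fix u assume "u \<in> Poly ` {xs. set xs \<subseteq> (UNIV::bit set) \<and> length xs = d}"
  then obtain xs where u: "u = Poly xs" and l: "length xs = d" by blast
  have "degree u \<le> d - 1"
    by (rule degree_le) (auto simp: u l nth_default_def)
  thus "u \<in> {u. degree u < d}" using assms by simp
qed

lemma inj_on_Poly_len: "inj_on Poly {xs::bit list. set xs \<subseteq> UNIV \<and> length xs = d}"
proof (rule inj_onI)
  fix xs ys :: "bit list"
  assume xs: "xs \<in> {xs. set xs \<subseteq> UNIV \<and> length xs = d}" and ys: "ys \<in> {xs. set xs \<subseteq> UNIV \<and> length xs = d}"
    and eq: "Poly xs = Poly ys"
  have "\<And>i. nth_default 0 xs i = nth_default 0 ys i"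
    using eq by (metis coeff_Poly_eq)
  thus "xs = ys" using xs ys
    by (intro nth_equalityI) (auto simp: nth_default_def, metis nth_default_def)
qed

lemma card_polys_deg_less:
  assumes "d \<ge> 1"
  shows "card {u::bit poly. degree u < d} = 2^d"
    and "finite {u::bit poly. degree u < d}"
proof -
  have fin: "finite (UNIV::bit set)" by (simp add: UNIV_bit)
  show "card {u::bit poly. degree u < d} = 2^d"
    unfolding polys_deg_less_eq[OF assms]
    using card_lists_length_eq[OF fin, of d]
    by (subst card_image[OF inj_on_Poly_len]) (simp add: card_UNIV_bit)
  show "finite {u::bit poly. degree u < d}"
    unfolding polys_deg_less_eq[OF assms]
    by (rule finite_imageI, rule finite_lists_length_eq[OF fin])
qed

lemma finite_polys_deg_le: "finite {u::bit poly. degree u \<le> n}"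
proof -
  have "{u::bit poly. degree u \<le> n} = {u. degree u < Suc n}" by auto
  thus ?thesis using card_polys_deg_less(2)[of "Suc n"] by simp
qed


lemma prime_elem_not_dvd_prod:
  assumes "prime_elem p" "finite A" "\<forall>x\<in>A. \<not> p dvd f x"
  shows "\<not> p dvd prod f A"
  using assms(2,3)
proof (induction A rule: finite_induct)
  case empty then show ?case using assms(1) by (simp add: prime_elem_def)
next
  case (insert x A)
  then show ?case using assms(1) by (simp add: prime_elem_dvd_mult_iff)
qed

lemma irreducible_degree_pos:
  assumes "irreducible (p::bit poly)" shows "degree p \<ge> 1"
proof -
  have "p \<noteq> 0" "\<not> is_unit p" using assms by (auto simp: irreducible_def)
  thus ?thesis using is_unit_iff_degree[of p] by auto
qed

lemma fermat:
  fixes p a :: "bit poly"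
  assumes irr: "irreducible p"
  shows "p dvd a^(2^degree p) - a"
proof -
  define d where "d = degree p"
  have d1: "d \<ge> 1" using irreducible_degree_pos[OF irr] by (simp add: d_def)
  have pr: "prime_elem p" using irr by (metis field_poly_irreducible_imp_prime)
  have p0: "p \<noteq> 0" using irr by auto
  show ?thesis
  proof (cases "p dvd a")
    case True
    have "p dvd a^(2^d)" using True by (metis dvd_power dvd_trans zero_less_power pos2 gr0_conv_Suc)
    thus ?thesis using True unfolding d_def by (simp add: dvd_diff)
  next
    case False
    define b where "b = a mod p"
    have b0: "b \<noteq> 0" using False by (simp add: b_def mod_eq_0_iff_dvd)
    have bd: "degree b < d" using degree_mod_less[OF p0, of a] b0 by (simp add: b_def d_def)
    have npb: "\<not> p dvd b" using False by (simp add: b_def dvd_mod_iff)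
    define U where "U = {u::bit poly. degree u < d} - {0}"
    have finU: "finite U" using card_polys_deg_less(2)[OF d1] by (simp add: U_def)
    have cardU: "card U = 2^d - 1"
      using card_polys_deg_less[OF d1] d1 by (simp add: U_def card_Diff_singleton)
    have ndvdU: "\<not> p dvd u" if "u \<in> U" for u
    proof
      assume "p dvd u"
      moreover have "u \<noteq> 0" "degree u < d" using that by (auto simp: U_def)
      ultimately show False using dvd_imp_degree_le[of p u] by (simp add: d_def)
    qed
    define h where "h u = (b*u) mod p" for u
    have hU: "h u \<in> U" if "u \<in> U" for u
    proof -
      have "\<not> p dvd b*u" using npb ndvdU[OF that] pr by (simp add: prime_elem_dvd_mult_iff)
      hence "h u \<noteq> 0" by (simp add: h_def mod_eq_0_iff_dvd)
      moreover have "degree (h u) < d" using degree_mod_less[OF p0, of "b*u"] \<open>h u \<noteq> 0\<close>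
        by (simp add: h_def d_def)
      ultimately show ?thesis by (simp add: U_def)
    qed
    have injh: "inj_on h U"
    proof (rule inj_onI)
      fix u v assume u: "u \<in> U" and v: "v \<in> U" and e: "h u = h v"
      hence "p dvd b*u - b*v" by (simp add: h_def mod_eq_dvd_iff)
      hence "p dvd b*(u - v)" by (simp add: algebra_simps)
      hence "p dvd u - v" using npb pr by (simp add: prime_elem_dvd_mult_iff)
      moreover have "degree (u - v) < d" using u v by (auto simp: U_def intro: le_less_trans[OF degree_diff_le_max])
      ultimately have "u - v = 0" using dvd_imp_degree_le[of p "u - v"] by (auto simp: d_def)
      thus "u = v" by simp
    qed
    have himg: "h ` U = U"
      by (rule card_subset_eq[OF finU]) (use hU card_image[OF injh] in auto)
    have "prod (\<lambda>u. u) U = prod (\<lambda>u. u) (h ` U)" using himg by simp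
    also have "\<dots> = prod h U" using prod.reindex[OF injh, of "\<lambda>u. u"] by simp
    finally have e1: "prod (\<lambda>u. u) U = prod h U" .
    have "prod h U mod p = prod (\<lambda>u. b*u) U mod p"
      unfolding h_def by (rule mod_prod_eq)
    also have "prod (\<lambda>u. b*u) U = b^(card U) * prod (\<lambda>u. u) U"
      by (simp add: prod.distrib)
    finally have "prod (\<lambda>u. u) U mod p = (b^(card U) * prod (\<lambda>u. u) U) mod p" using e1 by simp
    hence "p dvd (b^(card U) * prod (\<lambda>u. u) U) - prod (\<lambda>u. u) U"
      by (metis mod_eq_dvd_iff)
    hence "p dvd (b^(card U) - 1) * prod (\<lambda>u. u) U" by (simp add: algebra_simps)
    moreover have "\<not> p dvd prod (\<lambda>u. u) U"
      using prime_elem_not_dvd_prod[OF pr finU] ndvdU by auto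
    ultimately have "p dvd b^(card U) - 1" using pr by (simp add: prime_elem_dvd_mult_iff)
    hence "p dvd b * (b^(card U) - 1)" by simp
    moreover have "b * (b^(card U) - 1) = b^(2^d) - b"
    proof -
      have "Suc (card U) = 2^d" using cardU d1 by simp
      hence "b * b^(card U) = b^(2^d)" by (metis power_Suc)
      thus ?thesis by (simp add: algebra_simps)
    qed
    ultimately have bb: "p dvd b^(2^d) - b" by simp
    have ab: "p dvd a - b" by (simp add: b_def mod_eq_dvd_iff[symmetric])
    have "p dvd a^(2^d) - b^(2^d)" by (rule dvd_power_cong[OF ab])
    from dvd_diff[OF dvd_add[OF this bb] ab]
    show ?thesis by (simp add: d_def algebra_simps)
  qed
qed


lemma mult_lin_eq: "(q::'a::comm_ring_1 poly) * [:a, 1:] = smult a q + pCons 0 q"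
  by (simp add: mult_pCons_right)

lemma coeff_mult_lin: "coeff ((q::'a::comm_ring_1 poly) * [:a, 1:]) j = a * coeff q j + (if j = 0 then 0 else coeff q (j - 1))"
  by (cases j) (simp_all add: mult_lin_eq)

lemma prod_lin_coeffs:
  fixes e :: "nat \<Rightarrow> 'a::comm_ring_1"
  shows "coeff (\<Prod>i<n. [:e i, 1:]) n = 1"
    and "\<forall>j>n. coeff (\<Prod>i<n. [:e i, 1:]) j = 0"
    and "n \<ge> 1 \<Longrightarrow> coeff (\<Prod>i<n. [:e i, 1:]) (n - 1) = (\<Sum>i<n. e i)"
proof (induction n)
  case 0
  { case 1 show ?case by simp }
  { case 2 show ?case by simp }
  { case 3 then show ?case by simp }
next
  case (Suc n)
  have rec: "coeff (\<Prod>i<Suc n. [:e i, 1:]) j = e n * coeff (\<Prod>i<n. [:e i, 1:]) j +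
      (if j = 0 then 0 else coeff (\<Prod>i<n. [:e i, 1:]) (j - 1))" for j
    by (simp only: prod.lessThan_Suc coeff_mult_lin)
  { case 1 show ?case using Suc.IH(2) by (simp only: rec) (simp add: Suc.IH(1)) }
  { case 2 show ?case using Suc.IH(2) by (simp only: rec) auto }
  { case 3 show ?case
    proof (cases "n = 0")
      case True then show ?thesis by simp
    next
      case False
      then show ?thesis using Suc.IH(1) Suc.IH(3) by (simp only: rec) simp
    qed }
qed

lemma prod_lin_sq_coeff:
  fixes e :: "nat \<Rightarrow> bit poly"
  shows "coeff (\<Prod>i<n. [:(e i)^2, 1:]) j = (coeff (\<Prod>i<n. [:e i, 1:]) j)^2"
proof (induction n arbitrary: j)
  case 0 then show ?case by (cases j) simp_all
next
  case (Suc n)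
  have rec: "coeff (\<Prod>i<Suc n. [:f i, 1:]) j = f n * coeff (\<Prod>i<n. [:f i, 1:]) j +
      (if j = 0 then 0 else coeff (\<Prod>i<n. [:f i, 1:]) (j - 1))" for j and f :: "nat \<Rightarrow> bit poly"
    by (simp only: prod.lessThan_Suc coeff_mult_lin)
  show ?case
    by (simp only: rec) (simp add: Suc.IH frob_sq power_mult_distrib)
qed

lemma dvd_const_poly_poly:
  fixes p c :: "'a::comm_ring_1"
  assumes "[:p:] dvd R"
  shows "p dvd poly R c"
proof -
  from assms obtain S where "R = [:p:] * S" by (elim dvdE)
  thus ?thesis by simp
qed

lemma PL:
  fixes p c :: "bit poly"
  assumes pr: "prime_elem p" and k: "k \<ge> 1" and dv: "p dvd c^(2^k) - c"
  shows "\<exists>P0. degree P0 = k \<and> coeff P0 k = 1 \<and> p dvd pcompose P0 c \<and>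
           p dvd [:coeff P0 (k-1):] - (\<Sum>i<k. c^(2^i))"
proof -
  define Qf where "Qf = (\<Prod>i<k. [:c^(2^i), 1:])"
  define Qs where "Qs = (\<Prod>i<k. [:(c^(2^i))^2, 1:])"
  have cQs: "coeff Qs j = (coeff Qf j)^2" for j
    unfolding Qs_def Qf_def by (rule prod_lin_sq_coeff)
  obtain k' where kk: "k = Suc k'" using k by (cases k) auto
  define M where "M = (\<Prod>i<k'. [:c^(2^(Suc i)), 1:])"
  have sq: "(c^(2^i))^2 = c^(2^Suc i)" for i
    by (simp add: power_mult[symmetric] mult.commute)
  have Qf_eq: "Qf = [:c, 1:] * M"
    unfolding Qf_def M_def kk prod.lessThan_Suc_shift by simp
  have Qs_eq: "Qs = M * [:c^(2^k), 1:]"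
    unfolding Qs_def M_def kk prod.lessThan_Suc sq by simp
  have "[:c^(2^k), 1:] - [:c, 1:] = [:c^(2^k) - c:]" by simp
  hence "Qs - Qf = M * [:c^(2^k) - c:]"
    unfolding Qf_eq Qs_eq by (metis mult.commute right_diff_distrib)
  moreover have "[:p:] dvd M * [:c^(2^k) - c:]" by (rule dvd_mult) (simp add: dv)
  ultimately have "[:p:] dvd Qs - Qf" by simp
  hence sqd: "p dvd (coeff Qf j)^2 - coeff Qf j" for j
    using const_poly_dvd_iff[of p "Qs - Qf"] cQs by simp
  define h where "h a = (if p dvd a then (0::bit) else 1)" for a
  define P0 where "P0 = map_poly h Qf"
  have h0: "h 0 = 0" by (simp add: h_def)
  have cP0: "coeff P0 j = h (coeff Qf j)" for j
    by (simp add: P0_def coeff_map_poly h0)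
  have pn1: "\<not> p dvd 1" using pr by (simp add: prime_elem_def)
  have cong: "p dvd coeff Qf j - [:coeff P0 j:]" for j
  proof (cases "p dvd coeff Qf j")
    case True then show ?thesis by (simp add: cP0 h_def)
  next
    case False
    have "p dvd coeff Qf j * (coeff Qf j - 1)"
      using sqd[of j] by (simp add: power2_eq_square algebra_simps)
    hence "p dvd coeff Qf j - 1" using False pr by (simp add: prime_elem_dvd_mult_iff)
    thus ?thesis using False by (simp add: cP0 h_def pCons_one)
  qed
  have cQk: "coeff Qf k = 1" and cQgt: "\<forall>j>k. coeff Qf j = 0"
    and cQk1: "coeff Qf (k-1) = (\<Sum>i<k. c^(2^i))"
    using prod_lin_coeffs[where e="\<lambda>i. c^(2^i)" and n=k] k by (simp_all add: Qf_def)
  have cP0k: "coeff P0 k = 1" using cQk pn1 by (simp add: cP0 h_def)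
  have "degree P0 = k"
  proof (rule antisym)
    show "degree P0 \<le> k" by (rule degree_le) (simp add: cP0 cQgt h0)
    show "k \<le> degree P0" by (rule le_degree) (simp add: cP0k)
  qed
  moreover have "p dvd pcompose P0 c"
  proof -
    define Q0 where "Q0 = map_poly (\<lambda>x. [:x:]) P0"
    have cQ0: "coeff Q0 j = [:coeff P0 j:]" for j
      by (simp add: Q0_def coeff_map_poly)
    have "[:p:] dvd Qf - Q0"
      using cong by (simp add: const_poly_dvd_iff cQ0)
    hence "p dvd poly (Qf - Q0) c" by (rule dvd_const_poly_poly)
    moreover have "poly Qf c = 0"
    proof -
      have "poly Qf c = (\<Prod>i<k. poly [:c^(2^i), 1:] c)" by (simp add: Qf_def poly_prod)
      moreover have "poly [:c^(2^0), 1:] c = 0" by simp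
      ultimately show ?thesis using k by (metis (no_types, lifting) finite_lessThan lessThan_iff less_le_trans prod_zero zero_less_one)
    qed
    ultimately have "p dvd - pcompose P0 c" by (simp add: pcompose_altdef Q0_def)
    thus ?thesis by simp
  qed
  moreover have "p dvd [:coeff P0 (k-1):] - (\<Sum>i<k. c^(2^i))"
    using cong[of "k-1"] cQk1 by (simp add: dvd_diff_commute)
  ultimately show ?thesis using cP0k by blast
qed


abbreviation pT :: "bit poly" where "pT \<equiv> [:1,0,1:]"

definition Phi :: "nat \<Rightarrow> bit poly \<Rightarrow> bit poly" where
  "Phi r a = (\<Sum>j\<le>r. smult (coeff a j) (pX^(r-j) * pT^j))"

lemma pX_pow: "pX^s = monom 1 s"
  by (simp add: monom_altdef)

lemma coeff_pX_pow_mult: "coeff (pX^s * q) k = (if s \<le> k then coeff q (k - s) else 0)"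
  by (simp add: pX_pow coeff_monom_mult)

lemma pT_eq: "pT = pX^2 + 1"
  by (simp add: power2_eq_square one_pCons)

lemma degree_pT_pow: "degree (pT^j) = 2*j"
  by (subst degree_power_eq) auto

lemma lead_pT_pow: "coeff (pT^j) (2*j) = 1"
  using lead_coeff_power[of pT j] degree_pT_pow[of j] by simp

lemma coeff_pT_pow_0: "coeff (pT^j) 0 = 1"
  by (simp add: coeff_0_power)

lemma coeff_pT_pow_1: "coeff (pT^j) 1 = 0"
proof (induction j)
  case 0 then show ?case by simp
next
  case (Suc j)
  have "coeff (pT * pT^j) 1 = coeff (pT^j) 1" by simp
  thus ?case using Suc by simp
qed

lemma coeff_pT_pow_Suc0: "coeff (pT^j) (Suc 0) = 0"
  using coeff_pT_pow_1 by simp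

lemma reflect_pT: "reflect_poly pT = pT"
  by (simp add: reflect_poly_def)

lemma coeff_pT_pow_sym: "i \<le> 2*j \<Longrightarrow> coeff (pT^j) i = coeff (pT^j) (2*j - i)"
proof -
  assume i: "i \<le> 2*j"
  have "reflect_poly (pT^j) = pT^j" by (simp add: reflect_poly_power reflect_pT)
  hence "coeff (pT^j) i = coeff (reflect_poly (pT^j)) i" by simp
  also have "\<dots> = coeff (pT^j) (2*j - i)" using i by (simp add: coeff_reflect_poly degree_pT_pow)
  finally show ?thesis .
qed

lemma coeff_pT_pow_gt: "i > 2*j \<Longrightarrow> coeff (pT^j) i = 0"
  by (rule coeff_eq_0) (simp add: degree_pT_pow)

lemma coeff_Phi: "coeff (Phi r a) k = (\<Sum>j\<le>r. coeff a j * coeff (pX^(r-j) * pT^j) k)"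
  by (simp add: Phi_def coeff_sum)

lemma Phi_coeff0: "coeff (Phi r a) 0 = coeff a r"
proof -
  have "coeff (Phi r a) 0 = (\<Sum>j\<le>r. (if j = r then coeff a r else 0))"
    unfolding coeff_Phi by (intro sum.cong refl) (auto simp: coeff_pX_pow_mult coeff_pT_pow_0)
  thus ?thesis by simp
qed

lemma Phi_coeff1: "r \<ge> 1 \<Longrightarrow> coeff (Phi r a) 1 = coeff a (r - 1)"
proof -
  assume r: "r \<ge> 1"
  have "coeff (Phi r a) 1 = (\<Sum>j\<le>r. (if j = r - 1 then coeff a (r-1) else 0))"
    unfolding coeff_Phi using r
    by (intro sum.cong refl) (auto simp: coeff_pX_pow_mult coeff_pT_pow_0 coeff_pT_pow_1 coeff_pT_pow_Suc0 le_Suc_eq)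
  thus ?thesis using r by simp
qed

lemma Phi_poly1: "poly (Phi r a) 1 = coeff a 0"
proof -
  have pT1: "poly pT 1 = 0" by simp
  have "poly (Phi r a) 1 = (\<Sum>j\<le>r. (if j = 0 then coeff a 0 else 0))"
    unfolding Phi_def poly_sum by (intro sum.cong refl) (auto simp: pT1 zero_power)
  thus ?thesis by simp
qed

lemma Phi_add: "Phi r (a + b) = Phi r a + Phi r b"
  by (simp only: Phi_def coeff_add smult_add_left sum.distrib)

lemma Phi_0 [simp]: "Phi r 0 = 0"
  by (simp add: Phi_def)

lemma Phi_monom_top: "Phi r (monom c r) = smult c (pT^r)"
proof -
  have "Phi r (monom c r) = (\<Sum>j\<le>r. (if j = r then smult c (pT^r) else 0))"
    unfolding Phi_def by (intro sum.cong refl) (auto simp: coeff_monom)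
  thus ?thesis by simp
qed

lemma Phi_raise: "degree a \<le> r \<Longrightarrow> Phi (Suc r) a = pX * Phi r a"
proof -
  assume d: "degree a \<le> r"
  have "coeff a (Suc r) = 0" using d by (simp add: coeff_eq_0)
  hence "Phi (Suc r) a = (\<Sum>j\<le>r. smult (coeff a j) (pX^(Suc r-j) * pT^j))"
    by (simp add: Phi_def)
  also have "\<dots> = (\<Sum>j\<le>r. pX * smult (coeff a j) (pX^(r-j) * pT^j))"
    by (intro sum.cong refl) (simp add: Suc_diff_le mult.assoc)
  also have "\<dots> = pX * Phi r a" by (simp add: Phi_def sum_distrib_left)
  finally show ?thesis .
qed

lemma D_sym:
  assumes "j \<le> r" "k \<le> 2*r"
  shows "coeff (pX^(r-j) * pT^j) k = coeff (pX^(r-j) * pT^j) (2*r - k)"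
proof -
  consider "r - j \<le> k" "k \<le> r + j" | "r - j \<le> k" "k > r + j" | "k < r - j" by linarith
  then show ?thesis
  proof cases
    case 1
    have e: "2*r - k - (r - j) = 2*j - (k - (r - j))" using 1 assms by arith
    have i: "k - (r - j) \<le> 2*j" using 1 assms by arith
    have r2: "r - j \<le> 2*r - k" using 1 assms by arith
    show ?thesis using coeff_pT_pow_sym[OF i] 1 r2 e
      by (simp add: coeff_pX_pow_mult) (simp add: add.commute)
  next
    case 2
    then show ?thesis using assms by (simp add: coeff_pX_pow_mult coeff_pT_pow_gt)
  next
    case 3
    then show ?thesis using assms by (simp add: coeff_pX_pow_mult coeff_pT_pow_gt)
  qed
qed

lemma Phi_sym: "k \<le> 2*r \<Longrightarrow> coeff (Phi r a) k = coeff (Phi r a) (2*r - k)"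
  unfolding coeff_Phi
proof (intro sum.cong refl)
  fix j assume k: "k \<le> 2*r" and j: "j \<in> {..r}"
  have "j \<le> r" using j by simp
  from D_sym[OF this k] show "coeff a j * coeff (pX ^ (r - j) * pT ^ j) k =
         coeff a j * coeff (pX ^ (r - j) * pT ^ j) (2 * r - k)" by simp
qed

lemma D_coeff_top:
  assumes "j \<le> r" "n \<ge> r + j"
  shows "coeff (pX^(r-j) * pT^j) n = (if n = r + j then 1 else 0)"
  using assms lead_pT_pow[of j] by (auto simp: coeff_pX_pow_mult coeff_pT_pow_gt mult_2)

lemma Phi_top:
  assumes "a \<noteq> 0" "degree a \<le> r" "n \<ge> r + degree a"
  shows "coeff (Phi r a) n = (if n = r + degree a then 1 else 0)"
proof -
  let ?d = "degree a"
  have "coeff a ?d \<noteq> 0" using assms(1) by (rule leading_coeff_neq_0)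
  hence la: "coeff a ?d = 1" by (metis bit_not_zero_iff)
  have "coeff (Phi r a) n = (\<Sum>j\<le>r. (if j = ?d then coeff (pX^(r-?d) * pT^?d) n else 0))"
    unfolding coeff_Phi
  proof (intro sum.cong refl)
    fix j assume j: "j \<in> {..r}"
    show "coeff a j * coeff (pX^(r-j) * pT^j) n = (if j = ?d then coeff (pX^(r-?d) * pT^?d) n else 0)"
    proof (cases "j = ?d")
      case True then show ?thesis using la by simp
    next
      case False
      show ?thesis
      proof (cases "j < ?d")
        case True
        then show ?thesis using False j assms D_coeff_top[of j r n] by auto
      next
        case False2: False
        then show ?thesis using False by (simp add: coeff_eq_0)
      qed
    qed
  qed
  also have "\<dots> = coeff (pX^(r-?d) * pT^?d) n" using assms(2) by simp
  also have "\<dots> = (if n = r + ?d then 1 else 0)" using D_coeff_top[of ?d r n] assms by simp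
  finally show ?thesis .
qed

lemma Phi_degree:
  assumes "a \<noteq> 0" "degree a \<le> r"
  shows "degree (Phi r a) = r + degree a" and "coeff (Phi r a) (r + degree a) = 1"
proof -
  show c: "coeff (Phi r a) (r + degree a) = 1" using Phi_top[OF assms] by simp
  show "degree (Phi r a) = r + degree a"
  proof (rule antisym)
    show "degree (Phi r a) \<le> r + degree a"
      by (rule degree_le) (use Phi_top[OF assms] in auto)
    show "r + degree a \<le> degree (Phi r a)" by (rule le_degree) (simp add: c)
  qed
qed

lemma Phi_inj:
  assumes "degree a \<le> r" "degree b \<le> r" "Phi r a = Phi r b"
  shows "a = b"
proof (rule ccontr)
  assume "a \<noteq> b"
  hence ne: "a + b \<noteq> 0" by (metis add_eq_0_iff bit_poly_neg)
  have "degree (a + b) \<le> r" using assms by (meson degree_add_le)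
  hence "coeff (Phi r (a + b)) (r + degree (a+b)) = 1" using Phi_degree(2)[OF ne] by simp
  moreover have "Phi r (a + b) = 0" using assms(3) by (simp add: Phi_add)
  ultimately show False by simp
qed


lemma pCons0_eq: "pCons 0 q = pX * (q::bit poly)"
  by simp

lemma Phi_surj:
  "degree f \<le> 2*r \<Longrightarrow> (\<forall>k\<le>2*r. coeff f k = coeff f (2*r - k)) \<Longrightarrow> \<exists>a. degree a \<le> r \<and> f = Phi r a"
proof (induction r arbitrary: f)
  case 0
  have "Phi 0 f = [:coeff f 0:]" by (simp add: Phi_def)
  also have "\<dots> = f" using 0 by (simp add: degree_0_id)
  finally show ?case using 0 by (intro exI[of _ f]) simp
next
  case (Suc r)
  define c where "c = coeff f 0"
  define h where "h = f - smult c (pT^Suc r)"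
  have symT: "coeff (pT^Suc r) k = coeff (pT^Suc r) (2*Suc r - k)" if "k \<le> 2*Suc r" for k
    using coeff_pT_pow_sym[OF that] .
  have symh: "coeff h k = coeff h (2*Suc r - k)" if "k \<le> 2*Suc r" for k
  proof -
    have "coeff f k = coeff f (2*Suc r - k)" using Suc.prems(2) that by blast
    thus ?thesis using symT[OF that] by (simp only: h_def coeff_diff coeff_smult)
  qed
  have h0: "coeff h 0 = 0" by (simp add: h_def c_def coeff_pT_pow_0)
  have htop: "coeff h (2*Suc r) = 0" using symh[of 0] h0 by simp
  have hgt: "coeff h i = 0" if "i > 2*Suc r" for i
  proof -
    have "coeff f i = 0" using that Suc.prems(1) by (intro coeff_eq_0) simp
    moreover have "coeff (pT^Suc r) i = 0" using that by (rule coeff_pT_pow_gt)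
    ultimately show ?thesis by (simp only: h_def coeff_diff coeff_smult) simp
  qed
  obtain a0 h' where hh: "h = pCons a0 h'" by (cases h) auto
  have a0: "a0 = 0" using h0 hh by simp
  have dh': "degree h' \<le> 2*r"
  proof (rule degree_le, intro allI impI)
    fix i assume "2*r < i"
    hence "Suc i = 2*Suc r \<or> Suc i > 2*Suc r" by auto
    thus "coeff h' i = 0" using htop hgt[of "Suc i"] hh by auto
  qed
  have symh': "\<forall>k\<le>2*r. coeff h' k = coeff h' (2*r - k)"
  proof (intro allI impI)
    fix k assume k: "k \<le> 2*r"
    have "coeff h' k = coeff h (Suc k)" using hh by simp
    also have "\<dots> = coeff h (2*Suc r - Suc k)" using symh[of "Suc k"] k by simp
    also have "2*Suc r - Suc k = Suc (2*r - k)" using k by simp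
    also have "coeff h (Suc (2*r - k)) = coeff h' (2*r - k)" using hh by simp
    finally show "coeff h' k = coeff h' (2*r - k)" .
  qed
  obtain a' where a': "degree a' \<le> r" "h' = Phi r a'" using Suc.IH[OF dh' symh'] by blast
  have "f = h + smult c (pT^Suc r)" by (simp add: h_def)
  also have "h = pX * Phi r a'" using hh a0 a' by simp
  also have "\<dots> = Phi (Suc r) a'" using Phi_raise[OF a'(1)] by simp
  also have "smult c (pT^Suc r) = Phi (Suc r) (monom c (Suc r))" by (simp add: Phi_monom_top)
  also have "Phi (Suc r) a' + Phi (Suc r) (monom c (Suc r)) = Phi (Suc r) (a' + monom c (Suc r))"
    by (simp add: Phi_add)
  finally have "f = Phi (Suc r) (a' + monom c (Suc r))" .
  moreover have "degree (a' + monom c (Suc r)) \<le> Suc r"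
    using a'(1) by (intro degree_add_le) (auto simp: degree_monom_le intro: le_trans[OF degree_monom_le])
  ultimately show ?case by blast
qed

lemma pcompose_sum_upto:
  assumes "degree a \<le> n"
  shows "pcompose a q = (\<Sum>i\<le>n. smult (coeff a i) (q^i))"
proof -
  have dm: "degree (map_poly (\<lambda>x. [:x:]) a) = degree a"
    by (rule degree_map_poly) simp
  have "pcompose a q = (\<Sum>i\<le>degree a. smult (coeff a i) (q^i))"
    unfolding pcompose_altdef poly_altdef dm by (simp add: coeff_map_poly)
  also have "\<dots> = (\<Sum>i\<le>n. smult (coeff a i) (q^i))"
    by (rule sum.mono_neutral_left) (use assms in \<open>auto simp: coeff_eq_0\<close>)
  finally show ?thesis .
qed

lemma dvd_smult_bp: "(p::bit poly) dvd x \<Longrightarrow> p dvd smult c x"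
  by (metis dvd_mult mult.commute smult_dvd_cancel dvd_smult)

lemma Phi_cong:
  fixes p xi a :: "bit poly"
  assumes cx: "p dvd pX * xi - 1" and da: "degree a \<le> r"
  shows "p dvd pX^r * pcompose a (pX + xi) - Phi r a"
proof -
  let ?b = "pX + xi"
  have "pX^r * pcompose a ?b - Phi r a =
        (\<Sum>j\<le>r. smult (coeff a j) (pX^r * ?b^j - pX^(r-j) * pT^j))"
    unfolding pcompose_sum_upto[OF da] Phi_def
    by (simp add: sum_distrib_left smult_diff_right sum_subtractf)
  also have "p dvd \<dots>"
  proof (rule dvd_sum)
    fix j assume "j \<in> {..r}"
    hence j: "j \<le> r" by simp
    have "pX^r = pX^(r-j) * pX^j" using j by (simp add: power_add[symmetric])
    hence e1: "pX^r * ?b^j = pX^(r-j) * (pX * ?b)^j"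
      by (simp only: power_mult_distrib mult.assoc)
    have pT2: "pT = pX*pX + 1" using pT_eq by (simp only: power2_eq_square)
    have "pX * ?b - pT = pX * xi - 1" by (simp only: pT2) algebra
    hence "p dvd (pX * ?b)^j - pT^j" using cx by (metis dvd_power_cong)
    hence "p dvd pX^(r-j) * ((pX * ?b)^j - pT^j)" by (rule dvd_mult)
    moreover have "pX^(r-j) * ((pX * ?b)^j - pT^j) = pX^r * ?b^j - pX^(r-j) * pT^j"
      by (simp only: e1 right_diff_distrib)
    ultimately have "p dvd pX^r * ?b^j - pX^(r-j) * pT^j" by simp
    thus "p dvd smult (coeff a j) (pX^r * ?b^j - pX^(r-j) * pT^j)" by (rule dvd_smult_bp)
  qed
  finally show ?thesis .
qed


lemma sum_atMost_rev:
  fixes f :: "nat \<Rightarrow> 'a::ab_group_add" and n :: nat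
  shows "(\<Sum>i\<le>n. f (n - i)) = (\<Sum>i\<le>n. f i)"
  using sum_diff_split[where m=0 and n=n and f=f] by simp

lemma prime_of_irr: "irreducible (p::bit poly) \<Longrightarrow> prime_elem p"
  by (metis field_poly_irreducible_imp_prime)

lemma inv_exists:
  fixes p a :: "bit poly"
  assumes pi: "irreducible p" and nd: "\<not> p dvd a"
  shows "\<exists>i. p dvd a * i - 1"
proof -
  have pr: "prime_elem p" using pi by (rule prime_of_irr)
  define N where "N = (2::nat)^degree p - 1"
  have "2^degree p = Suc N" by (simp add: N_def)
  hence "a^(2^degree p) - a = a * (a^N - 1)" by (simp add: algebra_simps)
  hence "p dvd a * (a^N - 1)" using fermat[OF pi, of a] by simp
  hence "p dvd a^N - 1" using pr nd by (simp add: prime_elem_dvd_mult_iff)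
  moreover have "N \<ge> 1"
  proof -
    have "(2::nat)^1 \<le> 2^degree p" using irreducible_degree_pos[OF pi] by (rule power_increasing) simp
    thus ?thesis by (simp add: N_def)
  qed
  ultimately have "p dvd a * a^(N-1) - 1" by (metis Suc_diff_le diff_Suc_1 power_Suc)
  thus ?thesis by blast
qed

lemma const_cong:
  fixes a b :: bit
  assumes "prime_elem p" "p dvd [:a:] - [:b:]"
  shows "a = b"
proof (rule ccontr)
  assume "a \<noteq> b"
  hence "a - b = 1" by (cases a; cases b) auto
  hence "[:a:] - [:b:] = (1::bit poly)" by (simp add: one_pCons)
  thus False using assms by (simp add: prime_elem_def)
qed

lemma pcompose_pX: "pcompose pX c = c"
  by (simp add: pcompose_pCons)

lemma pcompose_pX_pow: "pcompose (pX^n) c = c^n"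
proof (induction n)
  case 0 then show ?case by (simp add: pcompose_1)
next
  case (Suc n) then show ?case by (simp only: power_Suc pcompose_mult pcompose_pX)
qed

lemma compose_dvd:
  assumes "g dvd R" "(p::bit poly) dvd pcompose g c"
  shows "p dvd pcompose R c"
proof -
  from assms(1) obtain q where "R = g * q" by (elim dvdE)
  thus ?thesis using assms(2) by (simp add: pcompose_mult)
qed

lemma fermat_comp:
  fixes g p c :: "bit poly"
  assumes "irreducible g" "p dvd pcompose g c"
  shows "p dvd c^(2^degree g) - c"
proof -
  have "g dvd pX^(2^degree g) - pX" using fermat[OF assms(1)] .
  from compose_dvd[OF this assms(2)] show ?thesis by (simp add: pcompose_diff pcompose_pX_pow pcompose_pX)
qed

lemma RG:
  fixes G P p c :: "bit poly"
  assumes gi: "irreducible G" and pr: "prime_elem p"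
    and d1: "p dvd pcompose G c" and d2: "p dvd pcompose P c"
  shows "G dvd P"
proof -
  define Nd where "Nd = (\<lambda>d. \<exists>Q. Q \<noteq> 0 \<and> p dvd pcompose Q c \<and> degree Q = d)"
  have G0: "G \<noteq> 0" using gi by auto
  have "Nd (degree G)" unfolding Nd_def using G0 d1 by blast
  define d0 where "d0 = (LEAST d. Nd d)"
  have "Nd d0" unfolding d0_def by (rule LeastI) (fact)
  then obtain h where h: "h \<noteq> 0" "p dvd pcompose h c" "degree h = d0" unfolding Nd_def by blast
  have hmin: "Q = 0" if "p dvd pcompose Q c" "degree Q < d0" for Q
  proof (rule ccontr)
    assume "Q \<noteq> 0"
    hence "Nd (degree Q)" unfolding Nd_def using that by blast
    hence "d0 \<le> degree Q" unfolding d0_def by (rule Least_le)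
    thus False using that by simp
  qed
  have modred: "Q mod h = 0" if "p dvd pcompose Q c" for Q
  proof (rule hmin)
    have "Q mod h = Q - h * (Q div h)" by (simp add: minus_div_mult_eq_mod[symmetric])
    hence "pcompose (Q mod h) c = pcompose Q c - pcompose h c * pcompose (Q div h) c"
      by (simp add: pcompose_diff pcompose_mult)
    thus "p dvd pcompose (Q mod h) c" using that h(2) by simp
    show "degree (Q mod h) < d0"
    proof (cases "Q mod h = 0")
      case True
      have "d0 \<noteq> 0"
      proof
        assume "d0 = 0"
        then obtain e where "h = [:e:]" using h(3) by (metis degree_0_id)
        hence "h = 1" using h(1) by (simp add: one_pCons)
        thus False using h(2) pr by (simp add: pcompose_1 prime_elem_def)
      qed
      thus ?thesis using True by simp
    next
      case False
      thus ?thesis using degree_mod_less[OF h(1), of Q] h(3) by simp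
    qed
  qed
  have "h dvd G" using modred[OF d1] by (simp add: mod_eq_0_iff_dvd)
  then obtain q where Gq: "G = h * q" by (elim dvdE)
  hence "is_unit h \<or> is_unit q" using gi by (meson irreducibleD)
  moreover have "\<not> is_unit h"
  proof
    assume "is_unit h"
    hence "degree h = 0" using h(1) by (simp add: is_unit_iff_degree)
    then obtain e where "h = [:e:]" by (metis degree_0_id)
    hence "h = 1" using h(1) by (simp add: one_pCons)
    thus False using h(2) pr by (simp add: pcompose_1 prime_elem_def)
  qed
  ultimately have "is_unit q" by blast
  hence "G dvd h" using Gq by (metis dvd_mult_unit_iff dvd_refl)
  moreover have "h dvd P" using modred[OF d2] by (simp add: mod_eq_0_iff_dvd)
  ultimately show ?thesis by (rule dvd_trans)
qed

lemma lead1: "(a::bit poly) \<noteq> 0 \<Longrightarrow> coeff a (degree a) = 1"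
  by (metis bit_not_zero_iff leading_coeff_neq_0)

lemma monic_dvd_eq:
  fixes G P :: "bit poly"
  assumes "G dvd P" "degree G = degree P" "P \<noteq> 0"
  shows "P = G"
proof -
  from assms(1) obtain q where q: "P = G * q" by (elim dvdE)
  have G0: "G \<noteq> 0" "q \<noteq> 0" using assms(3) q by auto
  hence "degree q = 0" using q assms(2) by (simp add: degree_mult_eq)
  then obtain e where e: "q = [:e:]" by (metis degree_0_id)
  have "e \<noteq> 0" using G0 e by simp
  hence "e = 1" by simp
  thus ?thesis using q e by (simp add: one_pCons[symmetric])
qed

lemma irr_coeff0:
  fixes g :: "bit poly"
  assumes "irreducible g" "degree g \<ge> 2"
  shows "coeff g 0 = 1"
proof (rule ccontr)
  assume "coeff g 0 \<noteq> 1"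
  hence c0: "coeff g 0 = 0" by simp
  obtain a g' where gg: "g = pCons a g'" by (cases g) auto
  have "a = 0" using c0 gg by simp
  hence "g = pX * g'" using gg by simp
  hence "is_unit pX \<or> is_unit g'" using assms(1) by (meson irreducibleD)
  moreover have "\<not> is_unit pX" by (simp add: is_unit_iff_degree)
  moreover have "\<not> is_unit g'"
  proof
    assume "is_unit g'"
    hence "degree g' = 0" "g' \<noteq> 0" by (metis is_unit_iff_degree not_is_unit_0)+
    thus False using gg \<open>a = 0\<close> assms(2) by simp
  qed
  ultimately show False by blast
qed

lemma irr_reflect:
  fixes g :: "bit poly"
  assumes gi: "irreducible g" and g0: "coeff g 0 \<noteq> 0"
  shows "irreducible (reflect_poly g)"
proof (rule irreducibleI)
  let ?G = "reflect_poly g"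
  have gnz: "g \<noteq> 0" using gi by auto
  have dG: "degree ?G = degree g" using g0 by simp
  have dg: "degree g \<ge> 1" using irreducible_degree_pos[OF gi] .
  have "coeff ?G 0 \<noteq> 0" using gnz by simp
  thus "?G \<noteq> 0" by auto
  show "\<not> is_unit ?G" using dG dg \<open>?G \<noteq> 0\<close> by (simp add: is_unit_iff_degree)
  fix a b assume ab: "?G = a * b"
  have "coeff ?G 0 \<noteq> 0" using gnz by simp
  hence a0: "coeff a 0 \<noteq> 0" and b0: "coeff b 0 \<noteq> 0" using ab by (auto simp: coeff_mult_0)
  have "g = reflect_poly ?G" using g0 by simp
  also have "\<dots> = reflect_poly a * reflect_poly b" using ab by (simp add: reflect_poly_mult)
  finally have "is_unit (reflect_poly a) \<or> is_unit (reflect_poly b)" using gi by (meson irreducibleD)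
  thus "is_unit a \<or> is_unit b"
  proof
    assume "is_unit (reflect_poly a)"
    hence "degree (reflect_poly a) = 0" by (metis is_unit_iff_degree not_is_unit_0)
    hence "degree a = 0" using a0 by simp
    moreover have "a \<noteq> 0" using a0 by auto
    ultimately show ?thesis by (simp add: is_unit_iff_degree)
  next
    assume "is_unit (reflect_poly b)"
    hence "degree (reflect_poly b) = 0" by (metis is_unit_iff_degree not_is_unit_0)
    hence "degree b = 0" using b0 by simp
    moreover have "b \<noteq> 0" using b0 by auto
    ultimately show ?thesis by (simp add: is_unit_iff_degree)
  qed
qed


lemma G1:
  fixes p u v x xi :: "'a::comm_ring_1"
  assumes "p dvd u + v - (x + xi)" "p dvd u*v - 1" "p dvd x*xi - 1"
  shows "p dvd (u - x)*(x*u - 1)"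
proof -
  have "(u - x)*(x*u - 1) = x*u*(u + v - (x + xi)) - x*(u*v - 1) + u*(x*xi - 1)" by (simp add: algebra_simps power2_eq_square)
  thus ?thesis using assms by (metis dvd_add dvd_diff dvd_mult)
qed

lemma G2:
  fixes p x xi w :: "bit poly"
  assumes "p dvd x*xi - 1" "p dvd (x+1)*w - 1"
  shows "p dvd (x + xi)*(x*w^2) - 1"
proof -
  have "(x + xi)*(x*w^2) - 1 = w^2*(x*xi - 1) + ((x+1)*w - 1)*((x+1)*w + 1) - 2*(x*w^2)" by (simp add: algebra_simps power2_eq_square)
  hence "(x + xi)*(x*w^2) - 1 = w^2*(x*xi - 1) + ((x+1)*w - 1)*((x+1)*w + 1)" by simp
  thus ?thesis using assms by (metis dvd_add dvd_mult dvd_mult2)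
qed

lemma G3:
  fixes p x w :: "bit poly"
  assumes "p dvd (x+1)*w - 1"
  shows "p dvd (x*w)^2 + x*w - x*w^2"
proof -
  have "(x*w)^2 + x*w - x*w^2 = x*w*((x+1)*w - 1) + 2*(x*w - x*w^2)" by (simp add: algebra_simps power2_eq_square)
  hence "(x*w)^2 + x*w - x*w^2 = x*w*((x+1)*w - 1)" by simp
  thus ?thesis using assms by (metis dvd_mult)
qed

lemma G4:
  fixes p u x w w' :: "'a::comm_ring_1"
  assumes "p dvd u - x" "p dvd (x+1)*w - 1" "p dvd (u+1)*w' - 1"
  shows "p dvd u*w' - x*w"
proof -
  have "u*w' - x*w = w'*(u - x) + x*(w*((u+1)*w' - 1) - w'*((x+1)*w - 1) - w*w'*(u - x))" by (simp add: algebra_simps power2_eq_square)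
  thus ?thesis using assms by (metis dvd_add dvd_diff dvd_mult)
qed

lemma G5:
  fixes p u x w w' :: "'a::comm_ring_1"
  assumes "p dvd x*u - 1" "p dvd (x+1)*w - 1" "p dvd (u+1)*w' - 1"
  shows "p dvd u*w' + x*w - 1"
proof -
  have "u*w' + x*w - 1 = w*(w'*(x*u - 1) + ((u+1)*w' - 1)) + ((x+1)*w - 1) - u*w'*((x+1)*w - 1)" by (simp add: algebra_simps power2_eq_square)
  thus ?thesis using assms by (metis dvd_add dvd_diff dvd_mult)
qed

lemma core_setup:
  fixes g p :: "bit poly"
  assumes m: "m \<ge> 1" and dg: "degree g = m" and g0: "coeff g 0 = 1"
    and pi: "irreducible p" and pd: "p dvd Phi m g"
  shows "\<not> p dvd pX" "\<not> p dvd pX + 1" "\<exists>xi. p dvd pX*xi - 1 \<and> p dvd pcompose g (pX + xi)"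
proof -
  let ?f = "Phi m g"
  have pr: "prime_elem p" using pi by (rule prime_of_irr)
  have gnz: "g \<noteq> 0" using dg m by auto
  have pn1: "\<not> p dvd 1" using pr by (simp add: prime_elem_def)
  have c0: "coeff ?f 0 = 1" using Phi_coeff0[of m g] lead1[OF gnz] dg by simp
  have "poly (?f - 1) 0 = 0" using c0 by (simp add: poly_0_coeff_0)
  hence "[:0, 1:] dvd ?f - 1" by (simp add: dvd_iff_poly_eq_0)
  have np: "\<not> p dvd pX"
  proof
    assume "p dvd pX"
    hence "p dvd ?f - 1" using \<open>[:0, 1:] dvd ?f - 1\<close> by (rule dvd_trans)
    from dvd_diff[OF pd this] have "p dvd ?f - (?f - 1)" .
    thus False using pn1 by simp
  qed
  thus "\<not> p dvd pX" .
  have "poly (?f - 1) 1 = 0" using Phi_poly1[of m g] g0 by simp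
  hence "[:1, 1:] dvd ?f - 1" using dvd_iff_poly_eq_0[of 1 "?f - 1"] by simp
  moreover have "[:1, 1:] = pX + (1::bit poly)" by (simp add: one_pCons)
  ultimately have "pX + 1 dvd ?f - 1" by simp
  show "\<not> p dvd pX + 1"
  proof
    assume "p dvd pX + 1"
    hence "p dvd ?f - 1" using \<open>pX + 1 dvd ?f - 1\<close> by (rule dvd_trans)
    from dvd_diff[OF pd this] have "p dvd ?f - (?f - 1)" .
    thus False using pn1 by simp
  qed
  obtain xi where xi: "p dvd pX * xi - 1" using inv_exists[OF pi np] by blast
  have "p dvd pX^m * pcompose g (pX + xi) - ?f" using Phi_cong[OF xi] dg by simp
  from dvd_add[OF this pd] have "p dvd pX^m * pcompose g (pX + xi)" by simp
  moreover have "\<not> p dvd pX^m" using np prime_elem_dvd_power[OF pr] by blast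
  ultimately have "p dvd pcompose g (pX + xi)" using pr by (simp add: prime_elem_dvd_mult_iff)
  thus "\<exists>xi. p dvd pX*xi - 1 \<and> p dvd pcompose g (pX + xi)" using xi by blast
qed


lemma core:
  fixes g p :: "bit poly"
  assumes m: "m \<ge> 1" and gi: "irreducible g" and dg: "degree g = m" and g0: "coeff g 0 = 1"
    and pi: "irreducible p" and pd: "p dvd Phi m g"
  shows "(p dvd pX^(2^m) - pX \<and> coeff g 1 = 0) \<or> (p dvd pX * pX^(2^m) - 1 \<and> coeff g 1 = 1)"
proof -
  have pr: "prime_elem p" using pi by (rule prime_of_irr)
  have pn1: "\<not> p dvd 1" using pr by (simp add: prime_elem_def)
  have gnz: "g \<noteq> 0" using dg m by auto
  obtain xi where E3: "p dvd pX*xi - 1" and gb: "p dvd pcompose g (pX + xi)"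
    using core_setup(3)[OF m dg g0 pi pd] by blast
  obtain w where A3: "p dvd (pX + 1) * w - 1"
    using inv_exists[OF pi core_setup(2)[OF m dg g0 pi pd]] by blast
  define \<beta> where "\<beta> = pX + xi"
  define u where "u = pX^(2^m)"
  define v where "v = xi^(2^m)"
  have "p dvd \<beta>^(2^m) - \<beta>" using fermat_comp[OF gi gb] dg by (simp add: \<beta>_def)
  moreover have "\<beta>^(2^m) = u + v" by (simp add: \<beta>_def u_def v_def frob)
  ultimately have E1: "p dvd u + v - (pX + xi)" by (simp add: \<beta>_def)
  have "p dvd (pX*xi)^(2^m) - 1^(2^m)" using E3 by (rule dvd_power_cong)
  moreover have "(pX*xi)^(2^m) = u*v" by (simp only: u_def v_def power_mult_distrib)
  ultimately have E2: "p dvd u*v - 1" by (simp only: power_one)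
  have "p dvd (u - pX)*(pX*u - 1)" using G1[OF E1 E2 E3] .
  hence caseAB: "p dvd u - pX \<or> p dvd pX*u - 1" using pr by (simp add: prime_elem_dvd_mult_iff)
  define c where "c = pX * w^2"
  define \<delta> where "\<delta> = pX * w"
  define G where "G = reflect_poly g"
  have g00: "coeff g 0 \<noteq> 0" using g0 by simp
  have Gi: "irreducible G" unfolding G_def using gi g00 by (rule irr_reflect)
  have dG: "degree G = m" using g00 dg by (simp add: G_def)
  have cG: "coeff G j = coeff g (m - j)" if "j \<le> m" for j
    using that dg by (simp add: G_def coeff_reflect_poly)
  have bc: "p dvd \<beta> * c - 1" unfolding \<beta>_def c_def by (rule G2[OF E3 A3])
  have nb: "\<not> p dvd \<beta>"
  proof
    assume "p dvd \<beta>"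
    hence "p dvd \<beta> * c" by simp
    from dvd_diff[OF this bc] have "p dvd \<beta> * c - (\<beta> * c - 1)" .
    thus False using pn1 by simp
  qed
  have Gc: "p dvd pcompose G c"
  proof -
    have e1: "pcompose G c = (\<Sum>j\<le>m. smult (coeff g (m - j)) (c^j))"
      unfolding pcompose_sum_upto[of G m c, OF dG[THEN eq_refl]] by (intro sum.cong refl) (simp add: cG)
    have e2: "pcompose g \<beta> = (\<Sum>j\<le>m. smult (coeff g (m - j)) (\<beta>^(m - j)))"
      unfolding pcompose_sum_upto[of g m \<beta>, OF dg[THEN eq_refl]]
      using sum_atMost_rev[of "\<lambda>i. smult (coeff g i) (\<beta>^i)" m] by simp
    have "\<beta>^m * pcompose G c - pcompose g \<beta> =
          (\<Sum>j\<le>m. smult (coeff g (m - j)) (\<beta>^m * c^j - \<beta>^(m - j)))"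
      unfolding e1 e2 by (simp add: sum_distrib_left smult_diff_right sum_subtractf)
    also have "p dvd \<dots>"
    proof (rule dvd_sum)
      fix j assume "j \<in> {..m}"
      hence j: "j \<le> m" by simp
      have "\<beta>^m = \<beta>^(m-j) * \<beta>^j" using j by (simp add: power_add[symmetric])
      hence "\<beta>^m * c^j - \<beta>^(m - j) = \<beta>^(m-j) * ((\<beta>*c)^j - 1^j)"
        by (simp add: power_mult_distrib algebra_simps)
      moreover have "p dvd (\<beta>*c)^j - 1^j" using bc by (rule dvd_power_cong)
      ultimately have "p dvd \<beta>^m * c^j - \<beta>^(m - j)" by simp
      thus "p dvd smult (coeff g (m - j)) (\<beta>^m * c^j - \<beta>^(m - j))" by (rule dvd_smult_bp)
    qed
    finally have "p dvd \<beta>^m * pcompose G c - pcompose g \<beta>" .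
    from dvd_add[OF this gb[folded \<beta>_def]] have "p dvd \<beta>^m * pcompose G c" by simp
    moreover have "\<not> p dvd \<beta>^m" using nb prime_elem_dvd_power[OF pr] by blast
    ultimately show ?thesis using pr by (simp add: prime_elem_dvd_mult_iff)
  qed
  have cf: "p dvd c^(2^m) - c" using fermat_comp[OF Gi Gc] dG by simp
  obtain P0 where P0: "degree P0 = m" "coeff P0 m = 1" "p dvd pcompose P0 c"
    "p dvd [:coeff P0 (m-1):] - (\<Sum>i<m. c^(2^i))"
    using PL[OF pr m cf] by blast
  have "G dvd P0" using RG[OF Gi pr Gc P0(3)] .
  moreover have "P0 \<noteq> 0" using P0(2) by auto
  ultimately have "P0 = G" using monic_dvd_eq P0(1) dG by metis
  hence "coeff P0 (m-1) = coeff g 1" using cG[of "m-1"] m by simp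
  hence tr: "p dvd [:coeff g 1:] - (\<Sum>i<m. c^(2^i))" using P0(4) by simp
  have d3: "p dvd (\<delta>)^2 + \<delta> - c" unfolding \<delta>_def c_def by (rule G3[OF A3])
  have tel: "(\<Sum>i<m. (\<delta>^2 + \<delta>)^(2^i)) = \<delta>^(2^m) - \<delta>"
  proof -
    have "(\<Sum>i<m. (\<delta>^2 + \<delta>)^(2^i)) = (\<Sum>i<m. \<delta>^(2^Suc i) - \<delta>^(2^i))"
    proof (intro sum.cong refl)
      fix i
      have "(\<delta>^2)^(2^i) = \<delta>^(2^Suc i)" by (simp add: power_mult[symmetric] mult.commute)
      thus "(\<delta>^2 + \<delta>)^(2^i) = \<delta>^(2^Suc i) - \<delta>^(2^i)" by (simp add: frob bit_poly_minus)
    qed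
    also have "\<dots> = \<delta>^(2^m) - \<delta>^(2^0)" by (rule sum_lessThan_telescope)
    finally show ?thesis by simp
  qed
  have "p dvd (\<Sum>i<m. (\<delta>^2 + \<delta>)^(2^i)) - (\<Sum>i<m. c^(2^i))"
    unfolding sum_subtractf[symmetric]
    by (rule dvd_sum) (rule dvd_power_cong[OF d3])
  hence "p dvd (\<delta>^(2^m) - \<delta>) - (\<Sum>i<m. c^(2^i))" using tel by simp
  from dvd_add[OF tr this] have tr2: "p dvd [:coeff g 1:] - (\<delta>^(2^m) - \<delta>)" by (simp add: bit_poly_minus)
  define w' where "w' = w^(2^m)"
  have dpow: "\<delta>^(2^m) = u * w'" by (simp only: \<delta>_def u_def w'_def power_mult_distrib)
  have "p dvd ((pX + 1) * w)^(2^m) - 1^(2^m)" using A3 by (rule dvd_power_cong)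
  moreover have "((pX + 1) * w)^(2^m) = (u + 1) * w'"
    by (simp only: power_mult_distrib frob power_one u_def w'_def)
  ultimately have A2: "p dvd (u + 1) * w' - 1" by simp
  from caseAB show ?thesis
  proof
    assume cA: "p dvd u - pX"
    have "p dvd u*w' - pX*w" using G4[OF cA A3 A2] .
    hence "p dvd \<delta>^(2^m) - \<delta>" by (subst dpow) (simp only: \<delta>_def)
    from dvd_add[OF tr2 this] have "p dvd [:coeff g 1:] - [:0:]" by simp
    hence "coeff g 1 = 0" by (rule const_cong[OF pr])
    thus ?thesis using cA by (simp add: u_def)
  next
    assume cB: "p dvd pX*u - 1"
    have "p dvd u*w' + pX*w - 1" using G5[OF cB A3 A2] .
    hence "p dvd (\<delta>^(2^m) - \<delta>) - 1" by (subst dpow) (simp only: \<delta>_def bit_poly_minus)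
    from dvd_add[OF tr2 this] have "p dvd [:coeff g 1:] - [:1:]" by (simp add: one_pCons)
    hence "coeff g 1 = 1" by (rule const_cong[OF pr])
    thus ?thesis using cB by (simp add: u_def)
  qed
qed


definition Sfix :: "bit poly \<Rightarrow> bit poly \<Rightarrow> nat \<Rightarrow> bool" where
  "Sfix p c k \<longleftrightarrow> p dvd c^(2^k) - c"

lemma Sfix_sub:
  assumes "Sfix p c a" "Sfix p c b" "b \<le> a"
  shows "Sfix p c (a - b)"
proof -
  have "p dvd (c^(2^b))^(2^(a-b)) - c^(2^(a-b))"
    using assms(2) unfolding Sfix_def by (rule dvd_power_cong)
  moreover have "(c^(2^b))^(2^(a-b)) = c^(2^a)"
    using assms(3) by (simp add: power_mult[symmetric] power_add[symmetric])
  ultimately have "p dvd c^(2^a) - c^(2^(a-b))" by simp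
  from dvd_diff[OF assms(1)[unfolded Sfix_def] this] show ?thesis
    unfolding Sfix_def by (simp add: bit_poly_minus add.commute)
qed

lemma Sfix_mult:
  assumes "Sfix p c b"
  shows "Sfix p c (k*b)"
proof (induction k)
  case 0 then show ?case by (simp add: Sfix_def)
next
  case (Suc k)
  have "p dvd (c^(2^b))^(2^(k*b)) - c^(2^(k*b))"
    using assms unfolding Sfix_def by (rule dvd_power_cong)
  moreover have "(c^(2^b))^(2^(k*b)) = c^(2^(Suc k * b))"
    by (simp add: power_mult[symmetric] power_add[symmetric])
  ultimately have "p dvd c^(2^(Suc k * b)) - c^(2^(k*b))" by simp
  from dvd_add[OF this Suc[unfolded Sfix_def]] show ?case unfolding Sfix_def by (simp add: bit_poly_minus add.commute)
qed

lemma Sfix_mod: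
  assumes "Sfix p c a" "Sfix p c b"
  shows "Sfix p c (a mod b)"
proof -
  have "Sfix p c ((a div b) * b)" using assms(2) by (rule Sfix_mult)
  moreover have "(a div b) * b \<le> a" using div_mult_mod_eq[of a b] by linarith
  ultimately have "Sfix p c (a - (a div b) * b)" using Sfix_sub[OF assms(1)] by blast
  thus ?thesis by (simp add: minus_div_mult_eq_mod)
qed

lemma Sfix_gcd:
  "Sfix p c a \<Longrightarrow> Sfix p c b \<Longrightarrow> Sfix p c (gcd a b)"
proof (induction a b rule: gcd_nat_induct)
  case (step a b)
  have "Sfix p c (a mod b)" using Sfix_mod[OF step.prems] .
  hence "Sfix p c (gcd b (a mod b))" using step.IH step.prems(2) by blast
  thus ?case using step.hyps by (simp add: gcd_non_0_nat)
qed simp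

lemma exists_irr_factor:
  fixes a :: "bit poly"
  shows "degree a \<ge> 1 \<Longrightarrow> \<exists>p. irreducible p \<and> p dvd a \<and> degree p \<le> degree a"
proof (induction "degree a" arbitrary: a rule: less_induct)
  case less
  show ?case
  proof (cases "irreducible a")
    case True then show ?thesis by (intro exI[of _ a]) auto
  next
    case False
    have a0: "a \<noteq> 0" using less.prems by auto
    have nu: "\<not> is_unit a" using less.prems a0 by (simp add: is_unit_iff_degree)
    obtain b c where bc: "a = b * c" "\<not> is_unit b" "\<not> is_unit c"
      using False a0 nu unfolding irreducible_def by blast
    have b0: "b \<noteq> 0" "c \<noteq> 0" using a0 bc by auto
    have db: "degree b \<ge> 1" using bc(2) b0 by (simp add: is_unit_iff_degree)
    have dc: "degree c \<ge> 1" using bc(3) b0 by (simp add: is_unit_iff_degree)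
    have dab: "degree a = degree b + degree c" using bc(1) b0 by (simp add: degree_mult_eq)
    hence "degree b < degree a" using dc by simp
    from less.hyps[OF this db] obtain p where "irreducible p" "p dvd b" "degree p \<le> degree b" by blast
    thus ?thesis using bc(1) dab by (metis dvd_mult2 le_add1 le_trans)
  qed
qed

lemma Phi_nz:
  assumes "a \<noteq> 0" "degree a \<le> r" shows "Phi r a \<noteq> 0"
  using Phi_degree(2)[OF assms] by auto

lemma H:
  fixes g :: "bit poly"
  assumes m: "m \<ge> 2" and dg: "degree g = m" and fi: "irreducible (Phi m g)"
  shows "coeff g 0 = 1" "irreducible g" "coeff g 1 = 1"
proof -
  let ?f = "Phi m g"
  have gnz: "g \<noteq> 0" using dg m by auto
  have df: "degree ?f = 2*m" using Phi_degree(1)[OF gnz] dg by simp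
  have fpr: "prime_elem ?f" using fi by (rule prime_of_irr)
  show g0: "coeff g 0 = 1"
  proof (rule ccontr)
    assume "coeff g 0 \<noteq> 1"
    hence "poly ?f 1 = 0" using Phi_poly1[of m g] by simp
    hence "[:1,1:] dvd ?f" using dvd_iff_poly_eq_0[of 1 ?f] by simp
    then obtain q where fq: "?f = [:1,1:] * q" by (elim dvdE)
    have "is_unit ([:1,1:]::bit poly) \<or> is_unit q" using irreducibleD[OF fi fq] .
    moreover have "\<not> is_unit ([:1,1:] :: bit poly)" by (simp add: is_unit_iff_degree)
    moreover have "\<not> is_unit q"
    proof
      assume "is_unit q"
      hence "degree q = 0" "q \<noteq> 0" by (metis is_unit_iff_degree not_is_unit_0)+
      have n1: "([:1,1:]::bit poly) \<noteq> 0" by simp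
      have "degree ?f = degree ([:1,1:]::bit poly) + degree q" unfolding fq
        by (rule degree_mult_eq[OF n1 \<open>q \<noteq> 0\<close>])
      hence "degree ?f = 1" using \<open>degree q = 0\<close> by simp
      thus False using df m by simp
    qed
    ultimately show False by blast
  qed
  have m1: "m \<ge> 1" using m by simp
  obtain xi where xi: "?f dvd pX*xi - 1" and gb: "?f dvd pcompose g (pX + xi)"
    using core_setup(3)[OF m1 dg g0 fi dvd_refl] by blast
  have nf: "\<not> ?f dvd Phi (degree a) a" if "a \<noteq> 0" "degree a < m" for a
  proof
    assume "?f dvd Phi (degree a) a"
    moreover have "Phi (degree a) a \<noteq> 0" using that by (intro Phi_nz) auto
    ultimately have "degree ?f \<le> degree (Phi (degree a) a)" by (rule dvd_imp_degree_le)
    moreover have "degree (Phi (degree a) a) = 2 * degree a" using Phi_degree(1)[OF that(1)] by simp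
    ultimately show False using df that(2) by simp
  qed
  have nf2: "\<not> ?f dvd pcompose a (pX + xi)" if "a \<noteq> 0" "degree a < m" for a
  proof
    assume "?f dvd pcompose a (pX + xi)"
    hence d1: "?f dvd pX^(degree a) * pcompose a (pX + xi)" by (rule dvd_mult)
    have d2: "?f dvd pX^(degree a) * pcompose a (pX + xi) - Phi (degree a) a"
      using Phi_cong[OF xi, of a "degree a"] by simp
    from dvd_diff[OF d1 d2] have "?f dvd Phi (degree a) a" by simp
    thus False using nf[OF that] by blast
  qed
  show gi: "irreducible g"
  proof (rule irreducibleI)
    show "g \<noteq> 0" by (rule gnz)
    show "\<not> is_unit g" using gnz dg m by (simp add: is_unit_iff_degree)
    fix a b assume ab: "g = a * b"
    show "is_unit a \<or> is_unit b"
    proof (rule ccontr)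
      assume "\<not> (is_unit a \<or> is_unit b)"
      hence nu: "\<not> is_unit a" "\<not> is_unit b" by auto
      have a0: "a \<noteq> 0" "b \<noteq> 0" using gnz ab by auto
      have da: "degree a \<ge> 1" "degree b \<ge> 1" using nu a0 by (auto simp: is_unit_iff_degree)
      have "degree g = degree a + degree b" using ab a0 by (simp add: degree_mult_eq)
      hence lt: "degree a < m" "degree b < m" using da dg by auto
      have "?f dvd pcompose a (pX + xi) * pcompose b (pX + xi)" using gb ab by (simp add: pcompose_mult)
      hence "?f dvd pcompose a (pX + xi) \<or> ?f dvd pcompose b (pX + xi)"
        using fpr by (simp add: prime_elem_dvd_mult_iff)
      thus False using nf2[OF a0(1) lt(1)] nf2[OF a0(2) lt(2)] by blast
    qed
  qed
  have "(?f dvd pX^(2^m) - pX \<and> coeff g 1 = 0) \<or> (?f dvd pX * pX^(2^m) - 1 \<and> coeff g 1 = 1)"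
    using core[OF m1 gi dg g0 fi dvd_refl] .
  moreover have "\<not> ?f dvd pX^(2^m) - pX"
  proof
    assume "?f dvd pX^(2^m) - pX"
    from PL[OF fpr m1 this] obtain P0 where P0: "degree P0 = m" "coeff P0 m = 1" "?f dvd pcompose P0 pX"
      by blast
    have "P0 \<noteq> 0" using P0(2) by auto
    hence "degree ?f \<le> degree P0" using P0(3) by (simp add: dvd_imp_degree_le)
    thus False using P0(1) df m by simp
  qed
  ultimately show "coeff g 1 = 1" by blast
qed


lemma num_aux:
  fixes m d :: nat
  assumes "m > 0" "m dvd d" "d dvd 2*m" "d \<noteq> m"
  shows "d = 2*m"
proof -
  obtain t where t: "d = m*t" using assms(2) by (elim dvdE)
  obtain s where s: "2*m = d*s" using assms(3) by (elim dvdE)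
  have "m*2 = m*(t*s)" using t s by (metis mult.assoc mult.commute)
  hence ts: "t*s = 2" using assms(1) by simp
  hence "t dvd 2" by (metis dvd_triv_left)
  moreover have "t \<noteq> 0" using ts by (metis mult_0 zero_neq_numeral)
  ultimately have "t \<le> 2" "t \<noteq> 0" by (auto dest: dvd_imp_le)
  hence "t = 1 \<or> t = 2" by auto
  thus ?thesis using t assms(4) by auto
qed

lemma G7:
  fixes p x u u' :: "'a::comm_ring_1"
  assumes "p dvd x*u - 1" "p dvd u*u' - 1"
  shows "p dvd u' - x"
proof -
  have "u' - x = x*(u*u' - 1) - u'*(x*u - 1)" by (simp add: algebra_simps)
  thus ?thesis using assms by (metis dvd_diff dvd_mult)
qed

lemma C2_deg:
  fixes g p :: "bit poly"
  assumes m: "m \<ge> 1" and gi: "irreducible g" and dg: "degree g = m" and g0: "coeff g 0 = 1"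
    and g1: "coeff g 1 = 1" and pi: "irreducible p" and pd: "p dvd Phi m g"
  shows "degree p = 2*m"
proof -
  have pr: "prime_elem p" using pi by (rule prime_of_irr)
  define u where "u = pX^(2^m)"
  have cB: "p dvd pX*u - 1"
    using core[OF m gi dg g0 pi pd] g1 by (auto simp: u_def)
  have np1: "\<not> p dvd pX + 1" using core_setup(2)[OF m dg g0 pi pd] .
  have notA: "\<not> p dvd u - pX"
  proof
    assume "p dvd u - pX"
    hence "p dvd pX*(u - pX)" by (rule dvd_mult)
    from dvd_diff[OF cB this] have "p dvd (pX*u - 1) - pX*(u - pX)" .
    moreover have "(pX*u - 1) - pX*(u - pX) = (pX + 1)*(pX - 1)" by (simp add: algebra_simps)
    moreover have "pX - 1 = pX + (1::bit poly)" by (rule bit_poly_minus)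
    ultimately have "p dvd (pX + 1)*(pX + 1)" by simp
    hence "p dvd pX + 1" using pr by (simp add: prime_elem_dvd_mult_iff)
    thus False using np1 by simp
  qed
  define d where "d = degree p"
  have d1: "d \<ge> 1" using irreducible_degree_pos[OF pi] by (simp add: d_def)
  have SXd: "Sfix p pX d" unfolding Sfix_def d_def by (rule fermat[OF pi])
  have SX2m: "Sfix p pX (2*m)"
  proof -
    have "p dvd (pX*u)^(2^m) - 1^(2^m)" using cB by (rule dvd_power_cong)
    moreover have "(pX*u)^(2^m) = u * u^(2^m)" by (simp only: power_mult_distrib u_def)
    ultimately have "p dvd u * u^(2^m) - 1" by (simp only: power_one)
    from G7[OF cB this] have "p dvd u^(2^m) - pX" .
    moreover have "u^(2^m) = pX^(2^(2*m))" by (simp add: u_def power_mult[symmetric] power_add[symmetric] mult_2)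
    ultimately show ?thesis by (simp add: Sfix_def)
  qed
  have nSXm: "\<not> Sfix p pX m" using notA by (simp add: Sfix_def u_def)
  define e where "e = gcd d (2*m)"
  have SXe: "Sfix p pX e" unfolding e_def by (rule Sfix_gcd[OF SXd SX2m])
  have e1: "e \<ge> 1" using d1 by (simp add: e_def Suc_le_eq)
  obtain P0 where P0: "degree P0 = e" "coeff P0 e = 1" "p dvd pcompose P0 pX"
    using PL[OF pr e1 SXe[unfolded Sfix_def]] by blast
  have "P0 \<noteq> 0" using P0(2) by auto
  hence "d \<le> e" using dvd_imp_degree_le[of p P0] P0(1,3) by (simp add: d_def)
  moreover have "e \<le> d" using d1 by (simp add: e_def)
  ultimately have "e = d" by simp
  hence ddvd: "d dvd 2*m" by (metis e_def gcd_dvd2)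
  obtain xi where gb: "p dvd pcompose g (pX + xi)"
    using core_setup(3)[OF m dg g0 pi pd] by blast
  have SBm: "Sfix p (pX + xi) m" using fermat_comp[OF gi gb] dg by (simp add: Sfix_def)
  have SBd: "Sfix p (pX + xi) d" unfolding Sfix_def d_def by (rule fermat[OF pi])
  define e' where "e' = gcd m d"
  have SBe: "Sfix p (pX + xi) e'" unfolding e'_def by (rule Sfix_gcd[OF SBm SBd])
  have e'1: "e' \<ge> 1" using m by (simp add: e'_def Suc_le_eq)
  obtain P1 where P1: "degree P1 = e'" "coeff P1 e' = 1" "p dvd pcompose P1 (pX + xi)"
    using PL[OF pr e'1 SBe[unfolded Sfix_def]] by blast
  have "g dvd P1" using RG[OF gi pr gb P1(3)] .
  moreover have "P1 \<noteq> 0" using P1(2) by auto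
  ultimately have "m \<le> e'" using P1(1) dg by (metis dvd_imp_degree_le)
  moreover have "e' \<le> m" using m by (simp add: e'_def)
  ultimately have "e' = m" by simp
  hence mdvd: "m dvd d" by (metis e'_def gcd_dvd2)
  have "d \<noteq> m" using SXd nSXm by auto
  from num_aux[OF _ mdvd ddvd this] m show ?thesis by (simp add: d_def)
qed

lemma C2:
  fixes g :: "bit poly"
  assumes m: "m \<ge> 1" and gi: "irreducible g" and dg: "degree g = m" and g0: "coeff g 0 = 1"
    and g1: "coeff g 1 = 1"
  shows "irreducible (Phi m g)"
proof (rule irreducibleI)
  let ?f = "Phi m g"
  have gnz: "g \<noteq> 0" using dg m by auto
  have df: "degree ?f = 2*m" using Phi_degree(1)[OF gnz] dg by simp
  show f0: "?f \<noteq> 0" using Phi_nz[OF gnz] dg by simp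
  show "\<not> is_unit ?f" using df m f0 by (simp add: is_unit_iff_degree)
  fix a b assume ab: "?f = a * b"
  show "is_unit a \<or> is_unit b"
  proof (rule ccontr)
    assume "\<not> (is_unit a \<or> is_unit b)"
    hence nu: "\<not> is_unit a" "\<not> is_unit b" by auto
    have a0: "a \<noteq> 0" "b \<noteq> 0" using f0 ab by auto
    have da: "degree a \<ge> 1" "degree b \<ge> 1" using nu a0 by (auto simp: is_unit_iff_degree)
    have "degree ?f = degree a + degree b" using ab a0 by (simp add: degree_mult_eq)
    hence lt: "degree a < 2*m" using da df by auto
    obtain p where p: "irreducible p" "p dvd a" "degree p \<le> degree a"
      using exists_irr_factor[OF da(1)] by blast
    have "p dvd ?f" using p(2) ab by simp
    from C2_deg[OF m gi dg g0 g1 p(1) this] show False using p(3) lt by simp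
  qed
qed


lemma inv_even_aux:
  "finite B \<Longrightarrow> card B = n \<Longrightarrow> (\<forall>x\<in>B. \<sigma> x \<in> B \<and> \<sigma> x \<noteq> x \<and> \<sigma> (\<sigma> x) = x) \<Longrightarrow> even n"
proof (induction n arbitrary: B rule: less_induct)
  case (less n)
  show ?case
  proof (cases "B = {}")
    case True then show ?thesis using less.prems by simp
  next
    case False
    then obtain x where x: "x \<in> B" by blast
    define B' where "B' = B - {x, \<sigma> x}"
    have sx: "\<sigma> x \<in> B" "\<sigma> x \<noteq> x" using less.prems(3) x by auto
    have cB': "card B' = n - 2" using less.prems(1,2) x sx by (simp add: B'_def card_Diff_subset)
    have n2: "n \<ge> 2"
    proof -
      have "card {x, \<sigma> x} \<le> card B" by (rule card_mono[OF less.prems(1)]) (use x sx in auto)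
      thus ?thesis using sx less.prems(2) by simp
    qed
    have "\<forall>y\<in>B'. \<sigma> y \<in> B' \<and> \<sigma> y \<noteq> y \<and> \<sigma> (\<sigma> y) = y"
    proof
      fix y assume y: "y \<in> B'"
      hence yB: "y \<in> B" "y \<noteq> x" "y \<noteq> \<sigma> x" by (auto simp: B'_def)
      have p: "\<sigma> y \<in> B" "\<sigma> y \<noteq> y" "\<sigma> (\<sigma> y) = y" using less.prems(3) yB(1) by auto
      have "\<sigma> y \<noteq> x" using p(3) yB(3) by auto
      moreover have "\<sigma> y \<noteq> \<sigma> x" using less.prems(3) x yB by metis
      ultimately show "\<sigma> y \<in> B' \<and> \<sigma> y \<noteq> y \<and> \<sigma> (\<sigma> y) = y" using p by (simp add: B'_def)
    qed
    moreover have "finite B'" using less.prems(1) by (simp add: B'_def)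
    ultimately have "even (n - 2)" using less.IH[of "n - 2" B'] cB' n2 by simp
    thus ?thesis using n2 by simp
  qed
qed

lemma inv_parity:
  assumes "finite A" "\<forall>x\<in>A. \<sigma> x \<in> A \<and> \<sigma> (\<sigma> x) = x"
  shows "odd (card A) \<longleftrightarrow> odd (card {x\<in>A. \<sigma> x = x})"
proof -
  let ?F = "{x\<in>A. \<sigma> x = x}" and ?B = "{x\<in>A. \<sigma> x \<noteq> x}"
  have "A = ?F \<union> ?B" by auto
  moreover have "?F \<inter> ?B = {}" by auto
  ultimately have "card A = card ?F + card ?B" using assms(1)
    by (metis (no_types, lifting) card_Un_disjoint finite_Un)
  moreover have "even (card ?B)"
    by (rule inv_even_aux[of ?B _ \<sigma>]) (use assms in auto)
  ultimately show ?thesis by simp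
qed

lemma S11_finite: "finite (S11 n)"
proof -
  have "S11 n \<subseteq> {u. degree u \<le> n}" by (auto simp: S11_def irred_polys_def)
  thus ?thesis using finite_polys_deg_le finite_subset by blast
qed

lemma S11D:
  assumes "f \<in> S11 n" "n \<ge> 2"
  shows "irreducible f" "degree f = n" "coeff f n = 1" "coeff f (n-1) = 1" "coeff f 1 = 1" "coeff f 0 = 1"
  using assms irr_coeff0[of f] by (auto simp: S11_def irred_polys_def)

lemma S11I:
  assumes "irreducible f" "degree f = n" "coeff f n = 1" "coeff f (n-1) = 1" "coeff f 1 = 1"
  shows "f \<in> S11 n"
  using assms by (auto simp: S11_def irred_polys_def)

lemma reflect_S11:
  assumes "f \<in> S11 n" "n \<ge> 2"
  shows "reflect_poly f \<in> S11 n" "reflect_poly (reflect_poly f) = f"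
proof -
  note F = S11D[OF assms]
  have c0: "coeff f 0 \<noteq> 0" using F(6) by simp
  show "reflect_poly (reflect_poly f) = f" using c0 by simp
  show "reflect_poly f \<in> S11 n"
  proof (rule S11I)
    show "irreducible (reflect_poly f)" using F(1) c0 by (rule irr_reflect)
    show "degree (reflect_poly f) = n" using c0 F(2) by simp
    show "coeff (reflect_poly f) n = 1" using F by (simp add: coeff_reflect_poly)
    show "coeff (reflect_poly f) (n-1) = 1" using F assms(2) by (simp add: coeff_reflect_poly)
    show "coeff (reflect_poly f) 1 = 1" using F assms(2) by (simp add: coeff_reflect_poly)
  qed
qed

lemma fixed_sym:
  assumes "reflect_poly f = f" "degree f = n" "k \<le> n"
  shows "coeff f k = coeff f (n - k)"
proof -
  have "coeff f k = coeff (reflect_poly f) k" using assms(1) by simp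
  thus ?thesis using assms(2,3) by (simp add: coeff_reflect_poly)
qed

lemma odd_sub_parity: "odd (n::nat) \<Longrightarrow> k \<le> n \<Longrightarrow> even (n - k) \<longleftrightarrow> odd k"
  by presburger

lemma odd_sym_sum:
  fixes a :: "nat \<Rightarrow> bit"
  assumes n: "odd n" and sym: "\<And>k. k \<le> n \<Longrightarrow> a k = a (n - k)"
  shows "(\<Sum>k\<le>n. a k) = 0"
proof -
  let ?E = "{k. k \<le> n \<and> even k}" and ?O = "{k. k \<le> n \<and> odd k}"
  have split: "{..n} = ?E \<union> ?O" by auto
  have "(\<Sum>k\<le>n. a k) = sum a ?E + sum a ?O"
    unfolding split by (rule sum.union_disjoint) auto
  moreover have "sum a ?O = sum a ?E"
  proof -
    have "sum a ?O = sum (\<lambda>k. a (n - k)) ?O"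
    proof (intro sum.cong refl)
      fix k assume "k \<in> ?O"
      hence "k \<le> n" by simp
      thus "a k = a (n - k)" by (rule sym)
    qed
    also have "\<dots> = sum a ?E"
      by (rule sum.reindex_bij_witness[where i = "\<lambda>k. n - k" and j = "\<lambda>k. n - k"])
         (use n in \<open>auto simp: odd_sub_parity\<close>)
    finally show ?thesis .
  qed
  ultimately show ?thesis by simp
qed

lemma no_fixed_odd:
  assumes "f \<in> S11 n" "n \<ge> 2" "odd n" "reflect_poly f = f"
  shows False
proof -
  note F = S11D[OF assms(1,2)]
  have "poly f 1 = (\<Sum>k\<le>n. coeff f k)" by (simp only: poly_altdef F(2) power_one mult_1_right)
  also have "\<dots> = 0" by (rule odd_sym_sum[OF assms(3)]) (rule fixed_sym[OF assms(4) F(2)])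
  finally have "poly f 1 = 0" .
  hence "[:1,1:] dvd f" using dvd_iff_poly_eq_0[of 1 f] by simp
  then obtain q where fq: "f = [:1,1:] * q" by (elim dvdE)
  have "is_unit ([:1,1:]::bit poly) \<or> is_unit q" using irreducibleD[OF F(1) fq] .
  moreover have "\<not> is_unit ([:1,1:] :: bit poly)" by (simp add: is_unit_iff_degree)
  moreover have "\<not> is_unit q"
  proof
    assume "is_unit q"
    hence "degree q = 0" "q \<noteq> 0" by (metis is_unit_iff_degree not_is_unit_0)+
    have n1: "([:1,1:]::bit poly) \<noteq> 0" by simp
    have "degree f = degree ([:1,1:]::bit poly) + degree q" unfolding fq
      by (rule degree_mult_eq[OF n1 \<open>q \<noteq> 0\<close>])
    thus False using \<open>degree q = 0\<close> F(2) assms(2) by simp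
  qed
  ultimately show False by blast
qed


definition Fix :: "nat \<Rightarrow> bit poly set" where
  "Fix n = {f \<in> S11 n. reflect_poly f = f}"

lemma Phi_in_Fix:
  assumes m: "m \<ge> 2" and g: "g \<in> S11 m"
  shows "Phi m g \<in> Fix (2*m)"
proof -
  note G = S11D[OF g m]
  let ?f = "Phi m g"
  have m1: "m \<ge> 1" using m by simp
  have gnz: "g \<noteq> 0" using G(2) m by auto
  have fi: "irreducible ?f" using C2[OF m1 G(1) G(2) G(6) G(5)] .
  have df: "degree ?f = 2*m" using Phi_degree(1)[OF gnz] G(2) by simp
  have c0: "coeff ?f 0 = 1" using Phi_coeff0[of m g] G(3) by simp
  have c1: "coeff ?f 1 = 1" using Phi_coeff1[OF m1, of g] G(4) by simp
  have sym: "coeff ?f k = coeff ?f (2*m - k)" if "k \<le> 2*m" for k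
    using Phi_sym[OF that] .
  have "?f \<in> S11 (2*m)"
  proof (rule S11I[OF fi df])
    show "coeff ?f (2*m) = 1" using sym[of 0] c0 by simp
    show "coeff ?f (2*m - 1) = 1" using sym[of 1] c1 m by simp
    show "coeff ?f 1 = 1" by (rule c1)
  qed
  moreover have "reflect_poly ?f = ?f"
  proof (rule poly_eqI)
    fix k
    show "coeff (reflect_poly ?f) k = coeff ?f k"
    proof (cases "k \<le> 2*m")
      case True
      then show ?thesis using sym[OF True] df by (simp add: coeff_reflect_poly)
    next
      case False
      then show ?thesis using df by (simp add: coeff_reflect_poly coeff_eq_0)
    qed
  qed
  ultimately show ?thesis by (simp add: Fix_def)
qed

lemma Fix_in_Phi:
  assumes m: "m \<ge> 2" and f: "f \<in> Fix (2*m)"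
  shows "f \<in> Phi m ` S11 m"
proof -
  have fS: "f \<in> S11 (2*m)" and rf: "reflect_poly f = f" using f by (auto simp: Fix_def)
  have m2: "2*m \<ge> 2" using m by simp
  note F = S11D[OF fS m2]
  have sf: "\<forall>k\<le>2*m. coeff f k = coeff f (2*m - k)"
    using fixed_sym[OF rf F(2)] by blast
  have "degree f \<le> 2*m" using F(2) by simp
  from Phi_surj[OF this sf] obtain g where g: "degree g \<le> m" "f = Phi m g" by blast
  have gnz: "g \<noteq> 0" using g(2) F(1) by auto
  have "degree f = m + degree g" using Phi_degree(1)[OF gnz g(1)] g(2) by simp
  hence dg: "degree g = m" using F(2) by simp
  have fi: "irreducible (Phi m g)" using F(1) g(2) by simp
  note HH = H[OF m dg fi]
  have m1: "m \<ge> 1" using m by simp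
  have "g \<in> S11 m"
  proof (rule S11I[OF HH(2) dg])
    show "coeff g m = 1" using lead1[OF gnz] dg by simp
    show "coeff g (m - 1) = 1" using Phi_coeff1[OF m1, of g] F(5) g(2) by simp
    show "coeff g 1 = 1" by (rule HH(3))
  qed
  thus ?thesis using g(2) by blast
qed

lemma card_Fix:
  assumes m: "m \<ge> 2"
  shows "card (Fix (2*m)) = card (S11 m)"
proof -
  have "Fix (2*m) = Phi m ` S11 m"
    using Phi_in_Fix[OF m] Fix_in_Phi[OF m] by blast
  moreover have "inj_on (Phi m) (S11 m)"
  proof (rule inj_onI)
    fix a b assume "a \<in> S11 m" "b \<in> S11 m" "Phi m a = Phi m b"
    thus "a = b" using S11D(2)[OF _ m] Phi_inj[of a m b] by simp
  qed
  ultimately show ?thesis by (simp add: card_image)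
qed

lemma S11_2: "S11 2 = {[:1,1,1:]}"
proof (intro equalityI subsetI)
  fix f :: "bit poly" assume f: "f \<in> S11 2"
  note F = S11D[OF f order_refl]
  show "f \<in> {[:1,1,1:]}"
  proof -
    have "f = [:1,1,1:]"
    proof (rule poly_eqI)
      fix k
      show "coeff f k = coeff [:1,1,1:] k"
      proof (cases "k \<le> 2")
        case True
        hence "k = 0 \<or> k = 1 \<or> k = 2" by auto
        thus ?thesis using F by (auto simp: numeral_2_eq_2)
      next
        case False
        thus ?thesis using F(2) by (simp add: coeff_eq_0 coeff_pCons split: nat.splits)
      qed
    qed
    thus ?thesis by simp
  qed
next
  fix f :: "bit poly" assume "f \<in> {[:1,1,1:]}"
  hence f: "f = [:1,1,1:]" by simp
  have "Phi 1 [:1,1:] = [:1,1,1:]" by (simp add: Phi_def one_pCons)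
  moreover have "irreducible (Phi 1 [:1,1:])"
    by (rule C2) (simp_all add: irreducible_linear_field_poly)
  ultimately have "irreducible f" using f by simp
  thus "f \<in> S11 2" using f by (simp add: S11_def irred_polys_def)
qed

theorem proposition1:
  fixes n :: nat
  assumes "n \<ge> 2"
  shows "odd (card (S11 n)) \<longleftrightarrow> (\<exists>k::nat. k \<ge> 1 \<and> n = 2 ^ k)"
  using assms
proof (induction n rule: less_induct)
  case (less n)
  have par: "odd (card (S11 n)) \<longleftrightarrow> odd (card (Fix n))"
    unfolding Fix_def
    by (rule inv_parity[OF S11_finite]) (use reflect_S11[OF _ less.prems] in blast)
  show ?case
  proof (cases "even n")
    case False
    have "Fix n = {}" using no_fixed_odd[OF _ less.prems False] by (auto simp: Fix_def)
    hence "\<not> odd (card (S11 n))" using par by simp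
    moreover have "\<not> (\<exists>k::nat. k \<ge> 1 \<and> n = 2 ^ k)"
      using False by (auto simp: dest: Suc_le_D)
    ultimately show ?thesis by simp
  next
    case True
    then obtain m where nm: "n = 2*m" by (elim evenE)
    show ?thesis
    proof (cases "m = 1")
      case True
      hence "n = 2" using nm by simp
      hence "card (S11 n) = 1" by (simp add: S11_2)
      moreover have "\<exists>k::nat. k \<ge> 1 \<and> n = 2 ^ k" using \<open>n = 2\<close> by (intro exI[of _ 1]) simp
      ultimately show ?thesis by simp
    next
      case False
      hence m2: "m \<ge> 2" using nm less.prems by auto
      have "odd (card (S11 n)) \<longleftrightarrow> odd (card (S11 m))"
        using par card_Fix[OF m2] nm by simp
      also have "\<dots> \<longleftrightarrow> (\<exists>k::nat. k \<ge> 1 \<and> m = 2 ^ k)"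
        using less.IH[of m] m2 nm by simp
      also have "\<dots> \<longleftrightarrow> (\<exists>k::nat. k \<ge> 1 \<and> n = 2 ^ k)"
      proof
        assume "\<exists>k::nat. k \<ge> 1 \<and> m = 2 ^ k"
        then obtain k where "k \<ge> 1" "m = 2^k" by blast
        thus "\<exists>k::nat. k \<ge> 1 \<and> n = 2 ^ k" using nm by (intro exI[of _ "Suc k"]) simp
      next
        assume "\<exists>k::nat. k \<ge> 1 \<and> n = 2 ^ k"
        then obtain k where k: "k \<ge> 1" "n = 2^k" by blast
        then obtain k' where k': "k = Suc k'" by (cases k) auto
        hence mk: "m = 2^k'" using k nm by simp
        have "k' \<ge> 1" using mk m2 by (cases k') auto
        thus "\<exists>k::nat. k \<ge> 1 \<and> m = 2 ^ k" using mk by blast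
      qed
      finally show ?thesis .
    qed
  qed
qed

end
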